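(* Let $(q_n)_{n \ge 1}$ be a sequence of positive rational numbers, and let $(p_n)_{n \ge 1}$ be a sequence of prime numbers such that, for every $n \in \mathbb{N}$, $p_n \mid \mathsf{d}(q_n)$ and $p_n \nmid \mathsf{d}(q_k)$ for every $k \in \mathbb{N}$ with $k \neq n$. Then the Puiseux monoid $M = \langle q_n \mid n \in \mathbb{N} \rangle$ is atomic and its set of atoms is $\mathcal{A}(M) = \{ q_n \mid n \in \mathbb{N} \}$.
   Context: For a positive rational $r = n/d$ with $n,d \in \mathbb{N}$ and $\gcd(n,d)=1$, write $\mathsf{n}(r) := n$ and $\mathsf{d}(r) := d$. A Puiseux monoid is an additive submonoid of $(\mathbb{Q}_{\ge 0},+)$; $\langle S \rangle$ denotes the submonoid generated by $S$. An atom of a (reduced, additive) monoid $M$ is a nonzero element $a$ such that $a = x + y$ with $x,y \in M$ implies $x = 0$ or $y = 0$; $\mathcal{A}(M)$ is the set of atoms. $M$ is atomic if every element of $M$ is a sum of finitely many atoms (the empty sum being $0$). *)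

theory Defs
  imports Complex_Main "HOL-Computational_Algebra.Primes"
begin

definition den :: "rat \<Rightarrow> int" where
  "den r = snd (quotient_of r)"

inductive_set gen_monoid :: "rat set \<Rightarrow> rat set" for S :: "rat set" where
  zero: "0 \<in> gen_monoid S"
| add: "s \<in> S \<Longrightarrow> x \<in> gen_monoid S \<Longrightarrow> s + x \<in> gen_monoid S"

(* atoms of a (reduced, additive) monoid M given as a subset of rat *)
definition atoms :: "rat set \<Rightarrow> rat set" where
  "atoms M = {a \<in> M. a \<noteq> 0 \<and> (\<forall>x\<in>M. \<forall>y\<in>M. a = x + y \<longrightarrow> x = 0 \<or> y = 0)}"

definition atomic :: "rat set \<Rightarrow> bool" where
  "atomic M = (\<forall>x\<in>M. \<exists>as. set as \<subseteq> atoms M \<and> x = sum_list as)"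

end

theory Submission
  imports Defs
begin

lemma den_dvd:
  assumes r: "r = of_int a / of_int b" and b: "b \<noteq> 0"
  shows "den r dvd b"
proof -
  obtain n d where qo: "quotient_of r = (n, d)" by (cases "quotient_of r") auto
  have rd: "r = of_int n / of_int d" using quotient_of_div[OF qo] .
  have d: "d > 0" using quotient_of_denom_pos[OF qo] .
  have cop: "coprime n d" using quotient_of_coprime[OF qo] .
  have "(of_int a :: rat) / of_int b = of_int n / of_int d" using r rd by simp
  hence "(of_int (a * d) :: rat) = of_int (n * b)" using b d by (simp add: field_simps)
  hence "a * d = n * b" by (simp only: of_int_eq_iff)
  hence "d dvd n * b" by (metis dvd_triv_right)
  hence "d dvd b" using cop by (metis coprime_commute coprime_dvd_mult_right_iff)
  thus ?thesis using qo by (simp add: den_def)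
qed

definition pint :: "int \<Rightarrow> rat set" where
  "pint p = {r. \<exists>a b. r = of_int a / of_int b \<and> b \<noteq> 0 \<and> \<not> p dvd b}"

lemma pint_iff:
  assumes "prime p"
  shows "r \<in> pint p \<longleftrightarrow> \<not> p dvd den r"
proof
  assume "r \<in> pint p"
  then obtain a b where "r = of_int a / of_int b" "b \<noteq> 0" "\<not> p dvd b"
    unfolding pint_def by blast
  thus "\<not> p dvd den r" using den_dvd by (meson dvd_trans)
next
  assume h: "\<not> p dvd den r"
  obtain n d where qo: "quotient_of r = (n, d)" by (cases "quotient_of r") auto
  have "r = of_int n / of_int d" using quotient_of_div[OF qo] .
  moreover have "d > 0" using quotient_of_denom_pos[OF qo] .
  moreover have "den r = d" using qo by (simp add: den_def)
  ultimately show "r \<in> pint p" using h unfolding pint_def by force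
qed

lemma pint_add:
  assumes "prime p" "x \<in> pint p" "y \<in> pint p"
  shows "x + y \<in> pint p"
proof -
  obtain a b where 1: "x = of_int a / of_int b" "b \<noteq> 0" "\<not> p dvd b"
    using assms(2) unfolding pint_def by blast
  obtain c d where 2: "y = of_int c / of_int d" "d \<noteq> 0" "\<not> p dvd d"
    using assms(3) unfolding pint_def by blast
  define N where "N = a * d + c * b"
  define D where "D = b * d"
  have "x + y = of_int N / of_int D"
    using 1 2 unfolding N_def D_def by (simp add: field_simps)
  moreover have "D \<noteq> 0" using 1 2 unfolding D_def by simp
  moreover have "\<not> p dvd D" using 1 2 assms(1) unfolding D_def by (simp add: prime_dvd_mult_iff)
  ultimately show ?thesis unfolding pint_def by blast
qed

lemma pint_zero': "prime p \<Longrightarrow> 0 \<in> pint p"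
proof -
  assume "prime p"
  hence "\<not> p dvd 1" using not_prime_unit by blast
  moreover have "(0::rat) = of_int 0 / of_int 1" by simp
  ultimately show ?thesis unfolding pint_def by (intro CollectI exI[of _ 0] exI[of _ 1]) simp
qed

lemma pint_sum:
  assumes "prime p" "\<forall>x\<in>set xs. x \<in> pint p"
  shows "sum_list xs \<in> pint p"
  using assms(2)
proof (induction xs)
  case Nil
  then show ?case using pint_zero'[OF assms(1)] by simp
next
  case (Cons a xs)
  then show ?case using pint_add[OF assms(1), of a "sum_list xs"] by simp
qed

lemma gen_rep:
  assumes "x \<in> gen_monoid {q n | n. n \<ge> 1}"
  shows "\<exists>ns. (\<forall>k\<in>set ns. k \<ge> (1::nat)) \<and> x = sum_list (map q ns)"
  using assms
proof (induction rule: gen_monoid.induct)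
  case zero
  then show ?case by (intro exI[of _ "[]"]) simp
next
  case (add s x)
  then obtain n ns where "s = q n" "n \<ge> 1" "\<forall>k\<in>set ns. k \<ge> 1" "x = sum_list (map q ns)" by blast
  then show ?case by (intro exI[of _ "n # ns"]) simp
qed

lemma gen_sum:
  assumes "set xs \<subseteq> S"
  shows "sum_list xs \<in> gen_monoid S"
  using assms by (induction xs) (auto intro: gen_monoid.intros)

lemma sum_nonneg:
  assumes "\<And>n. n \<ge> 1 \<Longrightarrow> q n > (0::rat)" "\<forall>k\<in>set ns. k \<ge> (1::nat)"
  shows "sum_list (map q ns) \<ge> 0"
  using assms(2)
proof (induction ns)
  case (Cons a ns)
  then have "q a > 0" using assms(1) by simp
  then show ?case using Cons by simp
qed simp

lemma sum_pos:
  assumes "\<And>n. n \<ge> 1 \<Longrightarrow> q n > (0::rat)" "\<forall>k\<in>set ns. k \<ge> (1::nat)" "ns \<noteq> []"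
  shows "sum_list (map q ns) > 0"
proof -
  obtain m ms where "ns = m # ms" using assms(3) by (cases ns) auto
  moreover have "q m > 0" using assms calculation by simp
  moreover have "sum_list (map q ms) \<ge> 0" using sum_nonneg[OF assms(1)] assms(2) calculation by simp
  ultimately show ?thesis by simp
qed

theorem proposition3p5:
  fixes q :: "nat \<Rightarrow> rat" and p :: "nat \<Rightarrow> int"
  assumes qpos: "\<And>n. n \<ge> 1 \<Longrightarrow> q n > 0"
    and pprime: "\<And>n. n \<ge> 1 \<Longrightarrow> prime (p n)"
    and pdvd: "\<And>n. n \<ge> 1 \<Longrightarrow> p n dvd den (q n)"
    and pndvd: "\<And>n k. n \<ge> 1 \<Longrightarrow> k \<ge> 1 \<Longrightarrow> k \<noteq> n \<Longrightarrow> \<not> p n dvd den (q k)"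
  shows "atomic (gen_monoid {q n | n. n \<ge> 1}) \<and>
         atoms (gen_monoid {q n | n. n \<ge> 1}) = {q n | n. n \<ge> 1}"
proof -
  define S where "S = {q n | n. n \<ge> 1}"
  define M where "M = gen_monoid S"
  have SM: "S \<subseteq> M" unfolding M_def
    using gen_monoid.add[OF _ gen_monoid.zero, of _ S] by auto
  have A1: "atoms M \<subseteq> S"
  proof
    fix a assume a: "a \<in> atoms M"
    hence aM: "a \<in> M" and a0: "a \<noteq> 0"
      and at: "\<forall>x\<in>M. \<forall>y\<in>M. a = x + y \<longrightarrow> x = 0 \<or> y = 0"
      unfolding atoms_def by auto
    from aM a0 obtain s x where "s \<in> S" "x \<in> M" "a = s + x"
      unfolding M_def by (cases rule: gen_monoid.cases) auto
    moreover have "s \<noteq> 0" using \<open>s \<in> S\<close> qpos unfolding S_def by force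
    ultimately have "x = 0" using at SM by blast
    thus "a \<in> S" using \<open>a = s + x\<close> \<open>s \<in> S\<close> by simp
  qed
  have A2: "S \<subseteq> atoms M"
  proof
    fix a assume "a \<in> S"
    then obtain n where n: "n \<ge> 1" "a = q n" unfolding S_def by blast
    have "q n \<noteq> 0" using qpos n by (metis less_irrefl)
    moreover have "\<not> (\<exists>x\<in>M. \<exists>y\<in>M. q n = x + y \<and> x \<noteq> 0 \<and> y \<noteq> 0)"
    proof
      assume "\<exists>x\<in>M. \<exists>y\<in>M. q n = x + y \<and> x \<noteq> 0 \<and> y \<noteq> 0"
      then obtain x y where xy: "x \<in> M" "y \<in> M" "q n = x + y" "x \<noteq> 0" "y \<noteq> 0" by blast
      obtain ns1 where ns1: "\<forall>k\<in>set ns1. k \<ge> 1" "x = sum_list (map q ns1)"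
        using gen_rep xy(1) unfolding M_def S_def by blast
      obtain ns2 where ns2: "\<forall>k\<in>set ns2. k \<ge> 1" "y = sum_list (map q ns2)"
        using gen_rep xy(2) unfolding M_def S_def by blast
      have ne1: "ns1 \<noteq> []" using ns1 xy by auto
      have ne2: "ns2 \<noteq> []" using ns2 xy by auto
      define ns where "ns = ns1 @ ns2"
      have nsge: "\<forall>k\<in>set ns. k \<ge> 1" using ns1 ns2 ns_def by auto
      have qs: "q n = sum_list (map q ns)" using xy ns1 ns2 ns_def by simp
      show False
      proof (cases "n \<in> set ns")
        case True
        have "q n = q n + sum_list (map q (remove1 n ns))"
          using qs sum_list_map_remove1[OF True, of q] by simp
        moreover have "remove1 n ns \<noteq> []"
        proof
          assume "remove1 n ns = []"
          hence "length ns = 1" using True by (metis length_remove1 length_0_conv length_pos_if_in_set Suc_pred One_nat_def)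
          thus False using ne1 ne2 ns_def by (cases ns1; cases ns2) auto
        qed
        moreover have "\<forall>k\<in>set (remove1 n ns). k \<ge> 1" using nsge by (meson notin_set_remove1)
        ultimately show False using sum_pos[OF qpos] by fastforce
      next
        case False
        have "\<forall>r\<in>set (map q ns). r \<in> pint (p n)"
        proof
          fix r assume "r \<in> set (map q ns)"
          then obtain k where "k \<in> set ns" "r = q k" by auto
          hence "k \<ge> 1" "k \<noteq> n" using nsge False by auto
          thus "r \<in> pint (p n)" using pint_iff[OF pprime[OF n(1)]] pndvd[OF n(1)] \<open>r = q k\<close> by auto
        qed
        hence "q n \<in> pint (p n)" using pint_sum[OF pprime[OF n(1)]] qs by simp
        thus False using pint_iff[OF pprime[OF n(1)]] pdvd[OF n(1)] by simp
      qed
    qed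
    ultimately show "a \<in> atoms M" using SM \<open>a \<in> S\<close> n unfolding atoms_def by auto
  qed
  have eq: "atoms M = S" using A1 A2 by blast
  have "atomic M"
    unfolding atomic_def
  proof
    fix x assume "x \<in> M"
    then obtain ns where "\<forall>k\<in>set ns. k \<ge> 1" "x = sum_list (map q ns)"
      using gen_rep unfolding M_def S_def by blast
    moreover have "set (map q ns) \<subseteq> atoms M" using calculation eq unfolding S_def by auto
    ultimately show "\<exists>as. set as \<subseteq> atoms M \<and> x = sum_list as" by blast
  qed
  thus ?thesis using eq unfolding M_def S_def by simp
qed

end
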